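(* For every $\theta\in\Theta$ and every mass vector $W=[w_1,\dots,w_n]$ (i.e. $w_i\ge 0$, $\sum_{i=1}^n w_i=1$), with induced distribution $\tilde{\mathbb P}_n=\sum_{i=1}^n w_i\delta_{\xi_i}$, every minimizer $\tilde\lambda_*(\theta)$ of $\lambda\mapsto \lambda\sigma^p+\tilde H(\theta,\lambda)$ over $\lambda\ge 0$ satisfies $$\tilde\lambda_*(\theta)\le \tau(\theta):=\mathtt C(\theta)\left(2^{p-1}+\frac{1+2^{p-1}\rho^p}{\sigma^p}\right),$$ where $\rho=\max_{i\in[n]}\mathtt d(\xi_i,\xi_0)$.
   Context: Setting: $\Xi=\mathbb X\times\mathbb Y$ with $\mathbb X\subseteq\mathbb R^m$, $\mathbb Y\subseteq\mathbb R$, equipped with the metric $\mathtt d((x,y),(x',y'))=\|x-x'\|+\frac{\gamma}{2}|y-y'|$ for a norm $\|\cdot\|$ on $\mathbb R^m$ and $\gamma>0$; $(\Xi,\mathtt d)$ is assumed complete. Fix $p\ge1$, $\sigma>0$, data points $\xi_1,\dots,\xi_n\in\Xi$, $[n]=\{1,\dots,n\}$. A loss $\ell:\mathbb R^d\times\Xi\to[0,\infty)$ and a feasible set $\Theta\subseteq\mathbb R^d$ are given. Assumption: $\ell(\theta,\cdot)$ is continuous for every $\theta\in\Theta$, and there exist a positive continuous function $\mathtt C(\theta)$ and a point $\xi_0\in\Xi$ with $\ell(\theta,\xi)\le \mathtt C(\theta)(1+\mathtt d^p(\xi,\xi_0))$ for all $\theta\in\Theta,\xi\in\Xi$. Define the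 Moreau–Yosida regularization $h(\theta,\lambda,\xi)=\sup_{\zeta\in\Xi}\{\ell(\theta,\zeta)-\lambda\mathtt d^p(\zeta,\xi)\}$, $h_i(\theta,\lambda)=h(\theta,\lambda,\xi_i)$, and for a mass vector $W$, $\tilde H(\theta,\lambda)=\sum_{i=1}^n w_ih_i(\theta,\lambda)$. *)

theory Defs
  imports "HOL-Analysis.Analysis"
begin

definition is_norm :: "(real ^ 'm \<Rightarrow> real) \<Rightarrow> bool" where
  "is_norm N \<longleftrightarrow> (\<forall>x. N x = 0 \<longleftrightarrow> x = 0) \<and> (\<forall>a x. N (a *\<^sub>R x) = \<bar>a\<bar> * N x)
     \<and> (\<forall>x y. N (x + y) \<le> N x + N y)"

definition dXi :: "(real ^ 'm \<Rightarrow> real) \<Rightarrow> real \<Rightarrow> ((real ^ 'm) \<times> real) \<Rightarrow> ((real ^ 'm) \<times> real) \<Rightarrow> real" where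
  "dXi N \<gamma> a b = N (fst a - fst b) + \<gamma> / 2 * \<bar>snd a - snd b\<bar>"

definition complete_wrt :: "('a \<Rightarrow> 'a \<Rightarrow> real) \<Rightarrow> 'a set \<Rightarrow> bool" where
  "complete_wrt d S \<longleftrightarrow> (\<forall>s. (\<forall>k. s k \<in> S) \<and> (\<forall>e>0. \<exists>M. \<forall>j\<ge>M. \<forall>k\<ge>M. d (s j) (s k) < e)
       \<longrightarrow> (\<exists>l\<in>S. (\<lambda>k. d (s k) l) \<longlonglongrightarrow> 0))"

definition continuous_wrt :: "('a \<Rightarrow> 'a \<Rightarrow> real) \<Rightarrow> 'a set \<Rightarrow> ('a \<Rightarrow> real) \<Rightarrow> bool" where
  "continuous_wrt d S f \<longleftrightarrow> (\<forall>x\<in>S. \<forall>e>0. \<exists>\<delta>>0. \<forall>z\<in>S. d z x < \<delta> \<longrightarrow> \<bar>f z - f x\<bar> < e)"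

definition MY_reg :: "('t \<Rightarrow> 'a \<Rightarrow> real) \<Rightarrow> ('a \<Rightarrow> 'a \<Rightarrow> real) \<Rightarrow> real \<Rightarrow> 'a set
      \<Rightarrow> 't \<Rightarrow> real \<Rightarrow> 'a \<Rightarrow> ereal" where
  "MY_reg loss d p Xi \<theta> lam \<xi> = (SUP \<zeta>\<in>Xi. ereal (loss \<theta> \<zeta> - lam * (d \<zeta> \<xi>) powr p))"

definition H_tilde :: "('t \<Rightarrow> 'a \<Rightarrow> real) \<Rightarrow> ('a \<Rightarrow> 'a \<Rightarrow> real) \<Rightarrow> real \<Rightarrow> 'a set
      \<Rightarrow> nat \<Rightarrow> (nat \<Rightarrow> 'a) \<Rightarrow> (nat \<Rightarrow> real) \<Rightarrow> 't \<Rightarrow> real \<Rightarrow> ereal" where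
  "H_tilde loss d p Xi n \<xi> w \<theta> lam = (\<Sum>i\<in>{1..n}. ereal (w i) * MY_reg loss d p Xi \<theta> lam (\<xi> i))"

end

theory Submission imports Defs "HOL-Analysis.Analysis" begin

lemma powr_conv:
  fixes a b p :: real
  assumes a: "a \<ge> 0" and b: "b \<ge> 0" and p: "p \<ge> 1"
  shows "(a + b) powr p \<le> 2 powr (p - 1) * (a powr p + b powr p)"
proof -
  have two: "2 powr (p - 1) \<ge> 1" using p by (intro ge_one_powr_ge_zero) auto
  have p2: "2 powr p = 2 * 2 powr (p - 1)" by (simp add: powr_diff)
  show ?thesis
  proof (cases "a = 0 \<or> b = 0")
    case True
    then show ?thesis using two a b
      by (auto intro!: mult_right_mono[of 1, simplified] simp: mult_le_cancel_right1)
  next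
    case False
    then have ap: "a > 0" "b > 0" using a b by auto
    have "((1 - 1/2) *\<^sub>R a + (1/2) *\<^sub>R b) powr p \<le> (1 - 1/2) * a powr p + (1/2) * b powr p"
      by (rule convex_onD[OF powr_convex[OF p]]) (use ap in auto)
    then have h: "((a + b) / 2) powr p \<le> (a powr p + b powr p) / 2" by (simp add: field_simps)
    have "(a + b) powr p = (2 * ((a + b) / 2)) powr p" by (rule arg_cong[where f="\<lambda>x. x powr p"]) simp
    also have "\<dots> = 2 powr p * ((a + b) / 2) powr p"
      using ap by (intro powr_mult) auto?
    also have "\<dots> \<le> 2 powr p * ((a powr p + b powr p) / 2)"
      by (rule mult_left_mono[OF h]) simp
    also have "\<dots> = 2 powr (p - 1) * (a powr p + b powr p)" by (simp add: p2)
    finally show ?thesis .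
  qed
qed

lemma d_nonneg: assumes "is_norm N" "\<gamma> > 0" shows "dXi N \<gamma> a b \<ge> 0"
proof -
  have "\<And>x. N x \<ge> 0"
  proof -
    fix x
    have "N (x + (-1) *\<^sub>R x) \<le> N x + N ((-1) *\<^sub>R x)" using assms(1) unfolding is_norm_def by blast
    moreover have "N ((-1) *\<^sub>R x) = \<bar>-1\<bar> * N x" using assms(1) unfolding is_norm_def by blast
    then have "N ((-1) *\<^sub>R x) = N x" by simp
    moreover have "N 0 = 0" using assms(1) unfolding is_norm_def by blast
    ultimately show "N x \<ge> 0" by simp
  qed
  then show ?thesis using assms(2) unfolding dXi_def by (simp add: add_nonneg_nonneg)
qed

lemma d_tri: assumes "is_norm N" "\<gamma> > 0" shows "dXi N \<gamma> a c \<le> dXi N \<gamma> a b + dXi N \<gamma> b c"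
proof -
  have "N (fst a - fst c) \<le> N (fst a - fst b) + N (fst b - fst c)"
    using assms(1) unfolding is_norm_def by (metis diff_add_cancel add_diff_eq)
  moreover have "\<bar>snd a - snd c\<bar> \<le> \<bar>snd a - snd b\<bar> + \<bar>snd b - snd c\<bar>" by linarith
  then have "\<gamma>/2 * \<bar>snd a - snd c\<bar> \<le> \<gamma>/2 * \<bar>snd a - snd b\<bar> + \<gamma>/2 * \<bar>snd b - snd c\<bar>"
    using assms(2) by (simp add: distrib_left[symmetric] mult_left_mono)
  ultimately show ?thesis unfolding dXi_def by linarith
qed

lemma d_self: assumes "is_norm N" shows "dXi N \<gamma> a a = 0"
  using assms unfolding dXi_def is_norm_def by simp
theorem lemma1:
  fixes N :: "real ^ 'm \<Rightarrow> real" and \<gamma> p \<sigma> :: real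
    and X :: "(real ^ 'm) set" and Y :: "real set"
    and n :: nat and \<xi> :: "nat \<Rightarrow> (real ^ 'm) \<times> real" and \<xi>0 :: "(real ^ 'm) \<times> real"
    and loss :: "real ^ 'd \<Rightarrow> (real ^ 'm) \<times> real \<Rightarrow> real" and \<Theta> :: "(real ^ 'd) set"
    and C :: "real ^ 'd \<Rightarrow> real"
    and w :: "nat \<Rightarrow> real" and \<theta> :: "real ^ 'd" and lam_s :: real
  assumes norm: "is_norm N"
    and gamma: "\<gamma> > 0"
    and complete: "complete_wrt (dXi N \<gamma>) (X \<times> Y)"
    and p: "p \<ge> 1" and sigma: "\<sigma> > 0"
    and data: "\<forall>i\<in>{1..n}. \<xi> i \<in> X \<times> Y"
    and xi0: "\<xi>0 \<in> X \<times> Y"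
    and loss_nonneg: "\<forall>t z. z \<in> X \<times> Y \<longrightarrow> loss t z \<ge> 0"
    and loss_cont: "\<forall>t\<in>\<Theta>. continuous_wrt (dXi N \<gamma>) (X \<times> Y) (loss t)"
    and C_cont: "continuous_on \<Theta> C" and C_pos: "\<forall>t\<in>\<Theta>. C t > 0"
    and growth: "\<forall>t\<in>\<Theta>. \<forall>z\<in>X \<times> Y. loss t z \<le> C t * (1 + (dXi N \<gamma> z \<xi>0) powr p)"
    and theta: "\<theta> \<in> \<Theta>"
    and w_nonneg: "\<forall>i\<in>{1..n}. w i \<ge> 0"
    and w_sum: "(\<Sum>i\<in>{1..n}. w i) = 1"
    and minimizer: "lam_s \<ge> 0"
      "\<forall>lam\<ge>0. ereal (lam_s * \<sigma> powr p) + H_tilde loss (dXi N \<gamma>) p (X \<times> Y) n \<xi> w \<theta> lam_s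
              \<le> ereal (lam * \<sigma> powr p) + H_tilde loss (dXi N \<gamma>) p (X \<times> Y) n \<xi> w \<theta> lam"
  shows "lam_s \<le> C \<theta> * (2 powr (p - 1)
            + (1 + 2 powr (p - 1) * (Max ((\<lambda>i. dXi N \<gamma> (\<xi> i) \<xi>0) ` {1..n})) powr p) / \<sigma> powr p)"
  proof -
  define d where "d = dXi N \<gamma>"
  define \<rho> where "\<rho> = Max ((\<lambda>i. dXi N \<gamma> (\<xi> i) \<xi>0) ` {1..n})"
  define l0 where "l0 = C \<theta> * 2 powr (p - 1)"
  define Bm where "Bm = C \<theta> * (1 + 2 powr (p - 1) * \<rho> powr p)"
  have Cpos: "C \<theta> > 0" using C_pos theta by blast
  have two: "2 powr (p - 1) \<ge> 0" by simp
  have dnn: "\<And>a b. d a b \<ge> 0" unfolding d_def using d_nonneg[OF norm gamma] .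
  have rho: "\<And>i. i \<in> {1..n} \<Longrightarrow> d (\<xi> i) \<xi>0 powr p \<le> \<rho> powr p"
  proof -
    fix i assume i: "i \<in> {1..n}"
    have "d (\<xi> i) \<xi>0 \<le> \<rho>" unfolding \<rho>_def d_def using i by (intro Max_ge) auto
    then show "d (\<xi> i) \<xi>0 powr p \<le> \<rho> powr p" using dnn p by (intro powr_mono2) auto
  qed
  have lower: "\<And>i lam. i \<in> {1..n} \<Longrightarrow> MY_reg loss d p (X \<times> Y) \<theta> lam (\<xi> i) \<ge> 0"
  proof -
    fix i lam assume i: "i \<in> {1..n}"
    have xi: "\<xi> i \<in> X \<times> Y" using data i by blast
    have "ereal (loss \<theta> (\<xi> i) - lam * d (\<xi> i) (\<xi> i) powr p) \<le> MY_reg loss d p (X \<times> Y) \<theta> lam (\<xi> i)"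
      unfolding MY_reg_def using xi by (rule SUP_upper)
    moreover have "d (\<xi> i) (\<xi> i) = 0" unfolding d_def using d_self[OF norm] .
    moreover have "loss \<theta> (\<xi> i) \<ge> 0" using loss_nonneg xi by metis
    ultimately have "ereal (loss \<theta> (\<xi> i)) \<le> MY_reg loss d p (X \<times> Y) \<theta> lam (\<xi> i)" "(0::ereal) \<le> ereal (loss \<theta> (\<xi> i))" by simp_all
    then show "MY_reg loss d p (X \<times> Y) \<theta> lam (\<xi> i) \<ge> 0" by (rule order_trans[rotated])
  qed
  have upper: "\<And>i. i \<in> {1..n} \<Longrightarrow> MY_reg loss d p (X \<times> Y) \<theta> l0 (\<xi> i) \<le> ereal Bm"
  proof -
    fix i assume i: "i \<in> {1..n}"
    have xi: "\<xi> i \<in> X \<times> Y" using data i by blast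
    show "MY_reg loss d p (X \<times> Y) \<theta> l0 (\<xi> i) \<le> ereal Bm"
      unfolding MY_reg_def
    proof (rule SUP_least)
      fix z assume z: "z \<in> X \<times> Y"
      have g: "loss \<theta> z \<le> C \<theta> * (1 + d z \<xi>0 powr p)" using growth theta z unfolding d_def by blast
      have t1: "d z \<xi>0 powr p \<le> (d z (\<xi> i) + d (\<xi> i) \<xi>0) powr p"
        using dnn p d_tri[OF norm gamma] unfolding d_def by (intro powr_mono2) auto
      have t2: "(d z (\<xi> i) + d (\<xi> i) \<xi>0) powr p \<le> 2 powr (p - 1) * (d z (\<xi> i) powr p + d (\<xi> i) \<xi>0 powr p)"
        using dnn p by (intro powr_conv) auto
      have t3: "C \<theta> * (1 + d z \<xi>0 powr p) \<le> C \<theta> * (1 + 2 powr (p - 1) * (d z (\<xi> i) powr p + d (\<xi> i) \<xi>0 powr p))"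
        using Cpos t1 t2 by (intro mult_left_mono) auto
      have t4: "C \<theta> * (1 + 2 powr (p - 1) * (d z (\<xi> i) powr p + d (\<xi> i) \<xi>0 powr p))
          = l0 * d z (\<xi> i) powr p + C \<theta> * (1 + 2 powr (p - 1) * d (\<xi> i) \<xi>0 powr p)"
        unfolding l0_def by (simp add: algebra_simps)
      have t5: "C \<theta> * (1 + 2 powr (p - 1) * d (\<xi> i) \<xi>0 powr p) \<le> Bm"
        unfolding Bm_def using Cpos two rho[OF i] by (intro mult_left_mono add_left_mono) auto
      have "loss \<theta> z - l0 * d z (\<xi> i) powr p \<le> Bm" using g t3 t4 t5 by linarith
      then show "ereal (loss \<theta> z - l0 * d z (\<xi> i) powr p) \<le> ereal Bm" by simp
    qed
  qed
  define r where "r i = real_of_ereal (MY_reg loss d p (X \<times> Y) \<theta> l0 (\<xi> i))" for i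
  have r: "\<And>i. i \<in> {1..n} \<Longrightarrow> MY_reg loss d p (X \<times> Y) \<theta> l0 (\<xi> i) = ereal (r i) \<and> r i \<le> Bm"
  proof -
    fix i assume i: "i \<in> {1..n}"
    have "MY_reg loss d p (X \<times> Y) \<theta> l0 (\<xi> i) \<noteq> \<infinity>" "MY_reg loss d p (X \<times> Y) \<theta> l0 (\<xi> i) \<noteq> -\<infinity>"
      using upper[OF i] lower[OF i] by auto
    then show "MY_reg loss d p (X \<times> Y) \<theta> l0 (\<xi> i) = ereal (r i) \<and> r i \<le> Bm"
      unfolding r_def using upper[OF i] by (cases "MY_reg loss d p (X \<times> Y) \<theta> l0 (\<xi> i)") auto
  qed
  have H0: "H_tilde loss d p (X \<times> Y) n \<xi> w \<theta> l0 = ereal (\<Sum>i\<in>{1..n}. w i * r i)"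
  proof -
    have "H_tilde loss d p (X \<times> Y) n \<xi> w \<theta> l0 = (\<Sum>i\<in>{1..n}. ereal (w i * r i))"
      unfolding H_tilde_def using r by (intro sum.cong) auto
    then show ?thesis by simp
  qed
  have "(\<Sum>i\<in>{1..n}. w i * r i) \<le> (\<Sum>i\<in>{1..n}. w i * Bm)"
    using r w_nonneg by (intro sum_mono mult_left_mono) auto
  also have "\<dots> = Bm" using w_sum by (simp add: sum_distrib_right[symmetric])
  finally have sumB: "(\<Sum>i\<in>{1..n}. w i * r i) \<le> Bm" .
  have Hs: "H_tilde loss d p (X \<times> Y) n \<xi> w \<theta> lam_s \<ge> 0"
    unfolding H_tilde_def
  proof (rule sum_nonneg)
    fix i assume i: "i \<in> {1..n}"
    show "0 \<le> ereal (w i) * MY_reg loss d p (X \<times> Y) \<theta> lam_s (\<xi> i)"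
      using lower[OF i] w_nonneg i by (intro ereal_0_le_mult) auto
  qed
  have l0nn: "l0 \<ge> 0" unfolding l0_def using Cpos by simp
  have "ereal (lam_s * \<sigma> powr p) \<le> ereal (lam_s * \<sigma> powr p) + H_tilde loss d p (X \<times> Y) n \<xi> w \<theta> lam_s"
    using Hs by (simp add: add_increasing2)
  also have "\<dots> \<le> ereal (l0 * \<sigma> powr p) + H_tilde loss d p (X \<times> Y) n \<xi> w \<theta> l0"
    using minimizer(2) l0nn unfolding d_def by blast
  also have "\<dots> = ereal (l0 * \<sigma> powr p + (\<Sum>i\<in>{1..n}. w i * r i))" using H0 by simp
  finally have "lam_s * \<sigma> powr p \<le> l0 * \<sigma> powr p + Bm" using sumB by simp
  then have "lam_s \<le> (l0 * \<sigma> powr p + Bm) / \<sigma> powr p" using sigma by (simp add: field_simps)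
  also have "\<dots> = l0 + Bm / \<sigma> powr p" using sigma by (simp add: field_simps)
  finally show ?thesis unfolding l0_def Bm_def \<rho>_def by (simp add: algebra_simps)
qed

end
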